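(* Let $D$ be a centrally finite division algebra with center $F$, and let $R=D[t_1,\ldots,t_n]$ be the ring of polynomials in $n$ central commuting variables over $D$. For any polynomial $p\in R$, there exist $p_1,\ldots,p_m\in F[t_1,\ldots,t_n]$ such that $D[p]=D[p_1,\ldots,p_m]$ inside $R$.
   Context: A division algebra is centrally finite if it is finite-dimensional over its center. For a subset $X\subseteq R$, $D[X]$ denotes the subring of $R$ generated by $D\cup X$. *)

theory Defs
  imports "HOL-Library.Poly_Mapping"
begin

definition center :: "'a::ring_1 set" where
  "center = {z. \<forall>x. z * x = x * z}"

definition centrally_finite :: "'a::division_ring itself \<Rightarrow> bool" where
  "centrally_finite _ \<longleftrightarrow>
     (\<exists>B::'a set. finite B \<and>
        (\<forall>x::'a. \<exists>c. (\<forall>b\<in>B. c b \<in> center) \<and> x = (\<Sum>b\<in>B. c b * b)))"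

text \<open>Polynomials with coefficients in 'd in commuting central variables
  t_0, t_1, ...; a monomial is a finitely supported exponent vector.\<close>
type_synonym 'd mpoly = "(nat \<Rightarrow>\<^sub>0 nat) \<Rightarrow>\<^sub>0 'd"

definition const_poly :: "'d::zero \<Rightarrow> 'd mpoly" where
  "const_poly d = Poly_Mapping.single 0 d"

definition poly_ring :: "nat \<Rightarrow> ('d::zero) mpoly set" where
  "poly_ring n = {p. \<forall>m\<in>Poly_Mapping.keys p. Poly_Mapping.keys m \<subseteq> {..<n}}"

definition center_coeffs :: "('d::ring_1) mpoly \<Rightarrow> bool" where
  "center_coeffs p \<longleftrightarrow> (\<forall>m. Poly_Mapping.lookup p m \<in> center)"

inductive_set adjoin :: "('d::ring_1) mpoly set \<Rightarrow> 'd mpoly set" for X where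
  const: "const_poly d \<in> adjoin X"
| gen: "x \<in> X \<Longrightarrow> x \<in> adjoin X"
| add: "a \<in> adjoin X \<Longrightarrow> b \<in> adjoin X \<Longrightarrow> a + b \<in> adjoin X"
| neg: "a \<in> adjoin X \<Longrightarrow> - a \<in> adjoin X"
| mult: "a \<in> adjoin X \<Longrightarrow> b \<in> adjoin X \<Longrightarrow> a * b \<in> adjoin X"

end

theory Submission
  imports Defs
begin
lemma lookup_const_mult: "Poly_Mapping.lookup (const_poly (x::'d::ring_1) * q) m = x * Poly_Mapping.lookup q m"
  unfolding const_poly_def mult_map_scale_conv_mult[symmetric]
  by (simp add: Poly_Mapping.map.rep_eq when_def)
lemma lookup_mult_const: "Poly_Mapping.lookup (q * const_poly (x::'d::ring_1)) m = Poly_Mapping.lookup q m * x"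
proof -
  have "\<And>a. (\<Sum>aa. if m = a + aa then if aa = 0 then x else 0 else 0) = (if a = m then x else 0)"
  proof -
    fix a
    have "(\<lambda>aa. if m = a + aa then if aa = 0 then x else 0 else 0) = (\<lambda>aa. if aa = 0 then (if a = m then x else 0) else 0)"
      by auto
    then show "(\<Sum>aa. if m = a + aa then if aa = 0 then x else 0 else 0) = (if a = m then x else 0)" by (simp only:) simp
  qed
  moreover have "(\<lambda>a. Poly_Mapping.lookup q a * (if a = m then x else 0)) = (\<lambda>a. if a = m then Poly_Mapping.lookup q a * x else 0)"
    by auto
  ultimately show ?thesis unfolding const_poly_def lookup_mult
    apply (simp add: lookup_single when_def del: Sum_any.delta)
    apply (simp only:)
    apply simp
    done
qed
lemma const_mult_const: "const_poly (a::'d::ring_1) * const_poly b = const_poly (a * b)"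
  unfolding const_poly_def by (simp add: mult_single)

lemma const_one: "const_poly (1::'d::ring_1) = 1"
  by (simp add: const_poly_def)

lemma adjoin_zero: "0 \<in> adjoin X"
  using adjoin.const[of 0 X] by (simp add: const_poly_def)

lemma adjoin_diff: "a \<in> adjoin X \<Longrightarrow> b \<in> adjoin X \<Longrightarrow> a - b \<in> adjoin X"
  using adjoin.add[OF _ adjoin.neg] by (metis diff_conv_add_uminus)

lemma adjoin_cmult: "a \<in> adjoin X \<Longrightarrow> const_poly d * a \<in> adjoin X"
  by (rule adjoin.mult[OF adjoin.const])

lemma adjoin_multc: "a \<in> adjoin X \<Longrightarrow> a * const_poly d \<in> adjoin X"
  by (rule adjoin.mult[OF _ adjoin.const])

lemma adjoin_sub: "X \<subseteq> adjoin Y \<Longrightarrow> adjoin X \<subseteq> adjoin Y"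
proof
  fix a assume "X \<subseteq> adjoin Y" "a \<in> adjoin X"
  from this(2,1) show "a \<in> adjoin Y"
    by (induction a rule: adjoin.induct) (auto intro: adjoin.intros)
qed

lemma adjoin_sum_list: "(\<And>x. x \<in> set xs \<Longrightarrow> x \<in> adjoin X) \<Longrightarrow> sum_list xs \<in> adjoin X"
  by (induction xs) (auto intro: adjoin_zero adjoin.add)

lemma center_comm: "center_coeffs g \<Longrightarrow> g * const_poly e = const_poly (e::'d::ring_1) * g"
  by (rule poly_mapping_eqI) (simp add: lookup_mult_const lookup_const_mult center_coeffs_def center_def)

lemma keys_cmult: "Poly_Mapping.keys (const_poly (x::'d::ring_1) * q) \<subseteq> Poly_Mapping.keys q"
  by (auto simp: in_keys_iff lookup_const_mult)

lemma keys_multc: "Poly_Mapping.keys (q * const_poly (x::'d::ring_1)) \<subseteq> Poly_Mapping.keys q"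
  by (auto simp: in_keys_iff lookup_mult_const)

lemma keys_diff: "Poly_Mapping.keys (a - (b::'d::ring_1 mpoly)) \<subseteq> Poly_Mapping.keys a \<union> Poly_Mapping.keys b"
  by (auto simp: in_keys_iff lookup_minus)

lemma sum_list_multc:
  assumes "\<forall>(d,g)\<in>set L. center_coeffs g"
  shows "(\<Sum>(d,g)\<leftarrow>L. const_poly d * g) * const_poly (e::'d::ring_1)
       = (\<Sum>(d,g)\<leftarrow>map (\<lambda>(d,g). (d * e, g)) L. const_poly d * g)"
  using assms
proof (induction L)
  case Nil then show ?case by simp
next
  case (Cons a L)
  obtain d g where a: "a = (d,g)" by fastforce
  have "const_poly d * g * const_poly e = const_poly (d * e) * g"
    using Cons.prems a center_comm[of g e]
    by (simp add: mult.assoc const_mult_const[symmetric])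
  then show ?case using Cons by (simp add: a distrib_right)
qed

lemma decomp:
  fixes q :: "('d::division_ring) mpoly"
  shows "q \<in> adjoin X \<Longrightarrow> \<exists>L. (\<forall>(d,g)\<in>set L. g \<in> adjoin X \<and> center_coeffs g
            \<and> Poly_Mapping.keys g \<subseteq> Poly_Mapping.keys q)
          \<and> q = (\<Sum>(d,g)\<leftarrow>L. const_poly d * g)"
proof (induction "card (Poly_Mapping.keys q)" arbitrary: q rule: less_induct)
  case less
  show ?case
  proof (cases "q = 0")
    case True
    then show ?thesis by (intro exI[of _ "[]"]) simp
  next
    case False
    then obtain m0 where m0: "m0 \<in> Poly_Mapping.keys q"
      by (metis all_not_in_conv keys_eq_empty)
    define c where "c = Poly_Mapping.lookup q m0"
    have c0: "c \<noteq> 0" using m0 by (simp add: c_def in_keys_iff)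
    define q' where "q' = q * const_poly (inverse c)"
    have lq': "Poly_Mapping.lookup q' m = Poly_Mapping.lookup q m * inverse c" for m
      by (simp add: q'_def lookup_mult_const)
    have kq': "Poly_Mapping.keys q' = Poly_Mapping.keys q"
      using c0 by (auto simp: in_keys_iff lq')
    have q'm0: "Poly_Mapping.lookup q' m0 = 1"
      using c0 by (simp add: lq' c_def)
    have q'A: "q' \<in> adjoin X" unfolding q'_def by (rule adjoin_multc[OF less.prems])
    have qq': "q = q' * const_poly c"
    proof -
      have "q' * const_poly c = q * (const_poly (inverse c) * const_poly c)"
        unfolding q'_def by (rule mult.assoc)
      also have "\<dots> = q * const_poly (inverse c * c)" by (simp only: const_mult_const)
      also have "\<dots> = q" using c0 by (simp add: const_one)
      finally show ?thesis by simp
    qed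
    show ?thesis
    proof (cases "center_coeffs q'")
      case True
      show ?thesis
      proof (intro exI[of _ "[(c, q')]"] conjI)
        show "q = (\<Sum>(d,g)\<leftarrow>[(c, q')]. const_poly d * g)"
          using qq' center_comm[OF True, of c] by simp
      qed (use True q'A kq' in auto)
    next
      case False
      then obtain m1 where a: "Poly_Mapping.lookup q' m1 \<notin> center"
        unfolding center_coeffs_def by blast
      define a where "a = Poly_Mapping.lookup q' m1"
      obtain x where xa0: "a * x \<noteq> x * a"
        using a unfolding a_def center_def by auto
      have xa: "x * a \<noteq> a * x" using xa0 by (rule not_sym)
      have "1 \<in> (center :: 'd set)" by (simp add: center_def)
      then have m10: "m1 \<noteq> m0" using a q'm0 by auto
      have "a \<noteq> 0" using a by (auto simp: a_def center_def)
      then have "m1 \<in> Poly_Mapping.keys q'" by (simp add: a_def in_keys_iff)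
      then have m1k: "m1 \<in> Poly_Mapping.keys q" using kq' by simp
      define s where "s = const_poly x * q' - q' * const_poly x"
      have ls: "Poly_Mapping.lookup s m = x * Poly_Mapping.lookup q' m - Poly_Mapping.lookup q' m * x" for m
        by (simp add: s_def lookup_minus lookup_mult_const lookup_const_mult)
      have sA: "s \<in> adjoin X"
        unfolding s_def by (intro adjoin_diff adjoin_cmult adjoin_multc q'A)
      have ks: "Poly_Mapping.keys s \<subseteq> Poly_Mapping.keys q - {m0}"
      proof
        fix m assume "m \<in> Poly_Mapping.keys s"
        then have ne: "Poly_Mapping.lookup s m \<noteq> 0" by (simp add: in_keys_iff)
        then have "m \<noteq> m0" by (auto simp: ls q'm0)
        moreover have "Poly_Mapping.lookup q' m \<noteq> 0" using ne by (auto simp: ls)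
        then have "m \<in> Poly_Mapping.keys q'" by (simp add: in_keys_iff)
        then have "m \<in> Poly_Mapping.keys q" using kq' by simp
        ultimately show "m \<in> Poly_Mapping.keys q - {m0}" by simp
      qed
      define e where "e = inverse (x * a - a * x) * a"
      define q'' where "q'' = q' - s * const_poly e"
      have lq'': "Poly_Mapping.lookup q'' m = Poly_Mapping.lookup q' m - (x * Poly_Mapping.lookup q' m - Poly_Mapping.lookup q' m * x) * e" for m
        by (simp add: q''_def lookup_minus lookup_mult_const ls)
      have nz: "x * a - a * x \<noteq> 0" using xa by simp
      have "(x * a - a * x) * e = ((x * a - a * x) * inverse (x * a - a * x)) * a"
        unfolding e_def by (rule mult.assoc[symmetric])
      also have "\<dots> = a" by (simp only: right_inverse[OF nz] mult_1_left)
      finally have ea: "(x * a - a * x) * e = a" .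
      have "Poly_Mapping.lookup q'' m1 = a - (x * a - a * x) * e"
        by (simp only: lq'' a_def)
      then have "Poly_Mapping.lookup q'' m1 = 0" by (simp only: ea diff_self)
      then have z1: "Poly_Mapping.lookup q'' m1 = 0" .
      have kq'': "Poly_Mapping.keys q'' \<subseteq> Poly_Mapping.keys q - {m1}"
      proof
        fix m assume "m \<in> Poly_Mapping.keys q''"
        then have ne: "Poly_Mapping.lookup q'' m \<noteq> 0" by (simp add: in_keys_iff)
        then have "m \<noteq> m1" using z1 by auto
        moreover have "Poly_Mapping.lookup q' m \<noteq> 0" using ne by (auto simp: lq'')
        then have "m \<in> Poly_Mapping.keys q'" by (simp add: in_keys_iff)
        then have "m \<in> Poly_Mapping.keys q" using kq' by simp
        ultimately show "m \<in> Poly_Mapping.keys q - {m1}" by simp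
      qed
      have q''A: "q'' \<in> adjoin X"
        unfolding q''_def by (intro adjoin_diff adjoin_multc q'A sA)
      have fin: "finite (Poly_Mapping.keys q)" by simp
      have "card (Poly_Mapping.keys s) < card (Poly_Mapping.keys q)"
        by (rule psubset_card_mono[OF fin]) (use ks m0 in blast)
      from less.hyps[OF this sA] obtain L1 where L1:
        "\<forall>(d,g)\<in>set L1. g \<in> adjoin X \<and> center_coeffs g \<and> Poly_Mapping.keys g \<subseteq> Poly_Mapping.keys s"
        "s = (\<Sum>(d,g)\<leftarrow>L1. const_poly d * g)" by blast
      have "card (Poly_Mapping.keys q'') < card (Poly_Mapping.keys q)"
        by (rule psubset_card_mono[OF fin]) (use kq'' m1k in blast)
      from less.hyps[OF this q''A] obtain L2 where L2:
        "\<forall>(d,g)\<in>set L2. g \<in> adjoin X \<and> center_coeffs g \<and> Poly_Mapping.keys g \<subseteq> Poly_Mapping.keys q''"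
        "q'' = (\<Sum>(d,g)\<leftarrow>L2. const_poly d * g)" by blast
      define La where "La = map (\<lambda>(d,g). (d * c, g)) L2"
      define Lb where "Lb = map (\<lambda>(d,g). (d * (e * c), g)) L1"
      have "q' = q'' + s * const_poly e" by (simp add: q''_def)
      then have "q = (q'' + s * const_poly e) * const_poly c" using qq' by simp
      also have "\<dots> = q'' * const_poly c + s * (const_poly e * const_poly c)"
        by (simp only: distrib_right mult.assoc)
      also have "\<dots> = q'' * const_poly c + s * const_poly (e * c)"
        by (simp only: const_mult_const)
      also have "q'' * const_poly c = (\<Sum>(d,g)\<leftarrow>La. const_poly d * g)"
        unfolding La_def L2(2) by (rule sum_list_multc) (use L2(1) in auto)
      also have "s * const_poly (e * c) = (\<Sum>(d,g)\<leftarrow>Lb. const_poly d * g)"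
        unfolding Lb_def L1(2) by (rule sum_list_multc) (use L1(1) in auto)
      finally have qsum: "q = (\<Sum>(d,g)\<leftarrow>La @ Lb. const_poly d * g)" by simp
      have Pa: "\<forall>(d,g)\<in>set La. g \<in> adjoin X \<and> center_coeffs g \<and> Poly_Mapping.keys g \<subseteq> Poly_Mapping.keys q"
      proof
        fix z assume "z \<in> set La"
        then obtain d g f where dg: "(d,g) \<in> set L2" "z = (f, g)" unfolding La_def by auto
        have "g \<in> adjoin X \<and> center_coeffs g \<and> Poly_Mapping.keys g \<subseteq> Poly_Mapping.keys q''"
          using L2(1) dg(1) by auto
        then show "case z of (d,g) \<Rightarrow> g \<in> adjoin X \<and> center_coeffs g \<and> Poly_Mapping.keys g \<subseteq> Poly_Mapping.keys q"
          using kq'' dg(2) by auto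
      qed
      have Pb: "\<forall>(d,g)\<in>set Lb. g \<in> adjoin X \<and> center_coeffs g \<and> Poly_Mapping.keys g \<subseteq> Poly_Mapping.keys q"
      proof
        fix z assume "z \<in> set Lb"
        then obtain d g f where dg: "(d,g) \<in> set L1" "z = (f, g)" unfolding Lb_def by auto
        have "g \<in> adjoin X \<and> center_coeffs g \<and> Poly_Mapping.keys g \<subseteq> Poly_Mapping.keys s"
          using L1(1) dg(1) by auto
        then show "case z of (d,g) \<Rightarrow> g \<in> adjoin X \<and> center_coeffs g \<and> Poly_Mapping.keys g \<subseteq> Poly_Mapping.keys q"
          using ks dg(2) by auto
      qed
      show ?thesis
        by (rule exI[of _ "La @ Lb"], rule conjI[OF _ qsum]) (use Pa Pb in auto)
    qed
  qed
qed

theorem lemma4p4: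
  fixes n :: nat and p :: "('d::division_ring) mpoly"
  assumes "centrally_finite TYPE('d)"
    and "p \<in> poly_ring n"
  shows "\<exists>ps :: 'd mpoly list. (\<forall>q\<in>set ps. q \<in> poly_ring n \<and> center_coeffs q)
           \<and> adjoin {p} = adjoin (set ps)"
proof -
  have "p \<in> adjoin {p}" by (rule adjoin.gen) simp
  from decomp[OF this] obtain L where L:
    "\<forall>(d,g)\<in>set L. g \<in> adjoin {p} \<and> center_coeffs g \<and> Poly_Mapping.keys g \<subseteq> Poly_Mapping.keys p"
    "p = (\<Sum>(d,g)\<leftarrow>L. const_poly d * g)" by blast
  show ?thesis
  proof (rule exI[of _ "map snd L"], rule conjI[OF ballI equalityI])
    fix q assume "q \<in> set (map snd L)"
    then obtain d where "(d, q) \<in> set L" by auto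
    with L(1) assms(2) show "q \<in> poly_ring n \<and> center_coeffs q"
      unfolding poly_ring_def by fastforce
  next
    have "p \<in> adjoin (set (map snd L))"
    proof (subst L(2), rule adjoin_sum_list)
      fix x assume "x \<in> set (map (\<lambda>(d,g). const_poly d * g) L)"
      then obtain d g where "(d,g) \<in> set L" "x = const_poly d * g" by auto
      then show "x \<in> adjoin (set (map snd L))"
        by (metis adjoin.gen adjoin_cmult image_eqI set_map snd_conv)
    qed
    then show "adjoin {p} \<subseteq> adjoin (set (map snd L))"
      by (intro adjoin_sub) simp
  next
    show "adjoin (set (map snd L)) \<subseteq> adjoin {p}"
      using L(1) by (intro adjoin_sub) force
  qed
qed

end
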